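(* Let $M=(S,\Sigma,\delta,s_0,F)$ be a deterministic finite automaton, let $T\ge 1$ be an integer, and for each $s\in S$ let $P(\cdot\mid s)$ and $Q(\cdot\mid s)$ be probability distributions on $\Sigma$. Define probability distributions $P$ and $Q$ on $\Sigma^T$ by $P(x)=\prod_{t=1}^T P(\sigma_t\mid s_t)$ and $Q(x)=\prod_{t=1}^T Q(\sigma_t\mid s_t)$ for $x=\sigma_1\cdots\sigma_T$, where $s_1\cdots s_{T+1}$ is the state sequence induced by $x$. Let $f^*:\Sigma^T\to\{0,1\}$ be $f^*(x)=\mathbb{1}(s_{T+1}\in F)$, and let $\hat f:\Sigma^T\to\{0,1\}$ be any function. Let $\epsilon=\max_{s\in S}\mathrm{TV}(P(\sigma\mid s),Q(\sigma\mid s))$. Then $$L_Q(\hat f)\le L_P(\hat f)+2T|S|^{T+1}\epsilon.$$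
   Context: A deterministic finite automaton $M=(S,\Sigma,\delta,s_0,F)$ has a finite state set $S$, a finite alphabet $\Sigma$, a transition function $\delta:S\times\Sigma\to S$, an initial state $s_0\in S$ and a set of final states $F\subseteq S$. For a string $x=\sigma_1\cdots\sigma_T$, the induced state sequence $s_1\cdots s_{T+1}$ is given by $s_1=s_0$ and $s_{t+1}=\delta(s_t,\sigma_t)$. For a distribution $D$ on $\Sigma^T$, $L_D(\hat f)=\mathbb{P}_{x\sim D}[\hat f(x)\neq f^*(x)]$. The total variation distance between discrete distributions is defined without the factor $1/2$: $\mathrm{TV}(\mu,\nu)=\sum_a|\mu(a)-\nu(a)|$. *)

theory Defs
  imports Main "HOL-Library.Indicator_Function"
begin

text \<open>For x = sigma_1 ... sigma_T (a list, index t-1 holds sigma_t),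
  state_seq gives s_1 ... s_(T+1), i.e. (state_seq delta s0 x) ! (t-1) = s_t.\<close>

fun state_seq :: "('s \<Rightarrow> 'a \<Rightarrow> 's) \<Rightarrow> 's \<Rightarrow> 'a list \<Rightarrow> 's list" where
  "state_seq delta s [] = [s]"
| "state_seq delta s (a # x) = s # state_seq delta (delta s a) x"

definition seq_prob :: "('s \<Rightarrow> 'a \<Rightarrow> 's) \<Rightarrow> 's \<Rightarrow> ('s \<Rightarrow> 'a \<Rightarrow> real) \<Rightarrow> 'a list \<Rightarrow> real" where
  "seq_prob delta s0 P x = (\<Prod>t<length x. P (state_seq delta s0 x ! t) (x ! t))"

definition target :: "('s \<Rightarrow> 'a \<Rightarrow> 's) \<Rightarrow> 's \<Rightarrow> 's set \<Rightarrow> 'a list \<Rightarrow> bool" where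
  "target delta s0 F x = (last (state_seq delta s0 x) \<in> F)"

definition loss :: "nat \<Rightarrow> ('a list \<Rightarrow> real) \<Rightarrow> ('a list \<Rightarrow> bool) \<Rightarrow> ('a list \<Rightarrow> bool) \<Rightarrow> real" where
  "loss T D fstar fhat = (\<Sum>x\<in>{x. length x = T}. D x * (if fhat x \<noteq> fstar x then 1 else 0))"

text \<open>Total variation without the factor 1/2.\<close>
definition tv :: "('a::finite \<Rightarrow> real) \<Rightarrow> ('a \<Rightarrow> real) \<Rightarrow> real" where
  "tv mu nu = (\<Sum>a\<in>UNIV. \<bar>mu a - nu a\<bar>)"

end

theory Submission
  imports Defs
begin

lemma seq_prob_Cons:
  "seq_prob delta s P (a#x) = P s a * seq_prob delta (delta s a) P x"
  unfolding seq_prob_def by (simp del: prod.lessThan_Suc add: prod.lessThan_Suc_shift)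

lemma seq_prob_Nil: "seq_prob delta s P [] = 1"
  unfolding seq_prob_def by simp

lemma sum_len_Suc:
  fixes f :: "'a::finite list \<Rightarrow> real"
  shows "sum f {x. length x = Suc n} = (\<Sum>a\<in>UNIV. \<Sum>x\<in>{x. length x = n}. f (a#x))"
proof -
  have eq: "{x. length x = Suc n} = (\<lambda>(a,x). a#x) ` (UNIV \<times> {x::'a list. length x = n})"
    by (auto simp: image_def length_Suc_conv)
  have inj: "inj_on (\<lambda>(a,x). a#x) (UNIV \<times> {x::'a list. length x = n})"
    by (auto simp: inj_on_def)
  show ?thesis
    unfolding eq sum.reindex[OF inj]
    by (simp add: sum.cartesian_product split_def comp_def)
qed

lemma seq_prob_sum:
  fixes delta :: "'s \<Rightarrow> 'a::finite \<Rightarrow> 's"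
  assumes "\<And>s. (\<Sum>a\<in>UNIV. Q s a) = 1"
  shows "(\<Sum>x\<in>{x. length x = n}. seq_prob delta s Q x) = 1"
proof (induction n arbitrary: s)
  case 0
  then show ?case by (simp add: seq_prob_Nil)
next
  case (Suc n)
  show ?case
    by (simp add: sum_len_Suc seq_prob_Cons sum_distrib_left[symmetric] Suc assms)
qed

lemma seq_prob_nonneg:
  assumes "\<And>s a. Q s a \<ge> 0"
  shows "seq_prob delta s Q x \<ge> 0"
  unfolding seq_prob_def by (intro prod_nonneg) (simp add: assms)

lemma tv_bound:
  fixes delta :: "'s \<Rightarrow> 'a::finite \<Rightarrow> 's"
  assumes "\<And>s a. P s a \<ge> 0" and "\<And>s a. Q s a \<ge> 0"
    and "\<And>s. (\<Sum>a\<in>UNIV. P s a) = 1" and "\<And>s. (\<Sum>a\<in>UNIV. Q s a) = 1"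
    and eps: "\<And>s. tv (P s) (Q s) \<le> e"
  shows "(\<Sum>x\<in>{x. length x = n}. \<bar>seq_prob delta s P x - seq_prob delta s Q x\<bar>) \<le> real n * e"
proof (induction n arbitrary: s)
  case 0
  then show ?case by (simp add: seq_prob_Nil)
next
  case (Suc n)
  let ?D = "\<lambda>s'. (\<Sum>x\<in>{x. length x = n}. \<bar>seq_prob delta s' P x - seq_prob delta s' Q x\<bar>)"
  have pt: "\<bar>P s a * seq_prob delta (delta s a) P x - Q s a * seq_prob delta (delta s a) Q x\<bar>
      \<le> P s a * \<bar>seq_prob delta (delta s a) P x - seq_prob delta (delta s a) Q x\<bar>
        + \<bar>P s a - Q s a\<bar> * seq_prob delta (delta s a) Q x" for a x
  proof -
    have "P s a * seq_prob delta (delta s a) P x - Q s a * seq_prob delta (delta s a) Q x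
      = P s a * (seq_prob delta (delta s a) P x - seq_prob delta (delta s a) Q x)
        + (P s a - Q s a) * seq_prob delta (delta s a) Q x" by (simp add: algebra_simps)
    also have "\<bar>\<dots>\<bar> \<le> \<bar>P s a * (seq_prob delta (delta s a) P x - seq_prob delta (delta s a) Q x)\<bar>
        + \<bar>(P s a - Q s a) * seq_prob delta (delta s a) Q x\<bar>" by (rule abs_triangle_ineq)
    also have "\<dots> = P s a * \<bar>seq_prob delta (delta s a) P x - seq_prob delta (delta s a) Q x\<bar>
        + \<bar>P s a - Q s a\<bar> * seq_prob delta (delta s a) Q x"
      using assms(1)[of s a] seq_prob_nonneg[OF assms(2), where delta=delta and s="delta s a" and x=x]
      by (simp add: abs_mult)
    finally show ?thesis .
  qed
  have "(\<Sum>x\<in>{x. length x = Suc n}. \<bar>seq_prob delta s P x - seq_prob delta s Q x\<bar>)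
     = (\<Sum>a\<in>UNIV. \<Sum>x\<in>{x. length x = n}. \<bar>P s a * seq_prob delta (delta s a) P x - Q s a * seq_prob delta (delta s a) Q x\<bar>)"
    by (simp add: sum_len_Suc seq_prob_Cons)
  also have "\<dots> \<le> (\<Sum>a\<in>UNIV. \<Sum>x\<in>{x. length x = n}. P s a * \<bar>seq_prob delta (delta s a) P x - seq_prob delta (delta s a) Q x\<bar>
        + \<bar>P s a - Q s a\<bar> * seq_prob delta (delta s a) Q x)"
    by (intro sum_mono pt)
  also have "\<dots> = (\<Sum>a\<in>UNIV. P s a * ?D (delta s a) + \<bar>P s a - Q s a\<bar>)"
    by (simp add: sum.distrib sum_distrib_left[symmetric] seq_prob_sum[OF assms(4)])
  also have "\<dots> \<le> (\<Sum>a\<in>UNIV. P s a * (real n * e) + \<bar>P s a - Q s a\<bar>)"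
    by (intro sum_mono add_mono mult_left_mono Suc.IH assms(1) order_refl)
  also have "\<dots> = real n * e + tv (P s) (Q s)"
    by (simp add: sum.distrib sum_distrib_right[symmetric] assms(3) tv_def)
  also have "\<dots> \<le> real (Suc n) * e" using eps[of s] by (simp add: algebra_simps)
  finally show ?case .
qed

theorem theorem4p3:
  fixes delta :: "'s::finite \<Rightarrow> 'a::finite \<Rightarrow> 's"
    and s0 :: 's and F :: "'s set" and T :: nat
    and P Q :: "'s \<Rightarrow> 'a \<Rightarrow> real"
    and fhat :: "'a list \<Rightarrow> bool"
  assumes "T \<ge> 1"
    and "\<And>s a. P s a \<ge> 0" and "\<And>s. (\<Sum>a\<in>UNIV. P s a) = 1"
    and "\<And>s a. Q s a \<ge> 0" and "\<And>s. (\<Sum>a\<in>UNIV. Q s a) = 1"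
  shows "loss T (seq_prob delta s0 Q) (target delta s0 F) fhat
         \<le> loss T (seq_prob delta s0 P) (target delta s0 F) fhat
           + 2 * real T * real (card (UNIV :: 's set)) ^ (T + 1) * Max ((\<lambda>s. tv (P s) (Q s)) ` UNIV)"
proof -
  define e where "e = Max ((\<lambda>s. tv (P s) (Q s)) ` UNIV)"
  have eps: "tv (P s) (Q s) \<le> e" for s unfolding e_def by (rule Max_ge) auto
  have tv0: "tv (P s0) (Q s0) \<ge> 0" unfolding tv_def by (intro sum_nonneg) auto
  hence e0: "e \<ge> 0" using eps[of s0] by linarith
  let ?I = "\<lambda>x. (if fhat x \<noteq> target delta s0 F x then 1 else 0::real)"
  have "loss T (seq_prob delta s0 Q) (target delta s0 F) fhat - loss T (seq_prob delta s0 P) (target delta s0 F) fhat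
      = (\<Sum>x\<in>{x. length x = T}. (seq_prob delta s0 Q x - seq_prob delta s0 P x) * ?I x)"
    unfolding loss_def by (simp add: sum_subtractf[symmetric] algebra_simps)
  also have "\<dots> \<le> (\<Sum>x\<in>{x. length x = T}. \<bar>seq_prob delta s0 P x - seq_prob delta s0 Q x\<bar>)"
    by (intro sum_mono) auto
  also have "\<dots> \<le> real T * e"
    by (rule tv_bound[OF assms(2,4,3,5) eps])
  also have "\<dots> \<le> 2 * real T * real (card (UNIV :: 's set)) ^ (T + 1) * e"
  proof -
    have "card (UNIV :: 's set) \<ge> 1" by (simp add: Suc_le_eq finite_UNIV_card_ge_0)
    hence "real (card (UNIV :: 's set)) ^ (T + 1) \<ge> 1" using one_le_power[of "real (card (UNIV :: 's set))" "T+1"] by linarith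
    hence "1 \<le> 2 * real (card (UNIV :: 's set)) ^ (T + 1)" by linarith
    from mult_right_mono[OF this, of "real T * e"] e0 show ?thesis
      by (simp add: algebra_simps)
  qed
  finally show ?thesis unfolding e_def by linarith
qed

end
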